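(* Let $X\in\mathcal{Y}$ be a Banach space with $\dim X>1$ and let $(x_n)_{n\in\mathbb{Z}_+}$ be a sequence in $X$ for which there is a non-zero $u\in X^*$ with $|u(x_n)|=O(n^{-1}\|x_n\|)$ as $n\to\infty$. Then the weak closure of $\Omega=\{zx_n:z\in\mathbb{K},\ n\in\mathbb{Z}_+\}$ is norm nowhere dense in $X$. In particular, $\Omega$ is not weakly dense in $X$.
   Context: $\mathbb{K}\in\{\mathbb{R},\mathbb{C}\}$ is the scalar field. $\mathcal{Y}$ is the class of Banach spaces $X$ such that for every sequence $(x_n)_{n\in\mathbb{Z}_+}$ in $X$ with $n=O(\|x_n\|)$ as $n\to\infty$, the set $\{x_n:n\in\mathbb{Z}_+\}$ is weakly closed. *)

theory Defs
  imports "HOL-Analysis.Analysis" "HOL-Library.Landau_Symbols"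
begin

text \<open>Scalar field: K = C if the flag c is True, K = R (embedded in C) otherwise.\<close>
definition Kscal :: "bool \<Rightarrow> complex set" where
  "Kscal c = (if c then UNIV else \<real>)"

text \<open>A complex structure on a real normed space: multiplication by i,
  compatible with the norm, so that (a + i b) x = a x + b J x makes the space
  a complex normed space.\<close>
definition cstruct :: "('a::real_normed_vector \<Rightarrow> 'a) \<Rightarrow> bool" where
  "cstruct J \<longleftrightarrow> linear J \<and> (\<forall>x. J (J x) = - x)
     \<and> (\<forall>z x. norm (Re z *\<^sub>R x + Im z *\<^sub>R J x) = cmod z * norm x)"

definition smul :: "('a::real_normed_vector \<Rightarrow> 'a) \<Rightarrow> complex \<Rightarrow> 'a \<Rightarrow> 'a" where
  "smul J z x = Re z *\<^sub>R x + Im z *\<^sub>R J x"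

definition Kdual :: "bool \<Rightarrow> ('a::real_normed_vector \<Rightarrow> 'a) \<Rightarrow> ('a \<Rightarrow> complex) set" where
  "Kdual c J = {u. bounded_linear u \<and> (\<forall>x. u x \<in> Kscal c)
      \<and> (\<forall>z\<in>Kscal c. \<forall>x. u (smul J z x) = z * u x)}"

definition weak_top :: "bool \<Rightarrow> ('a::real_normed_vector \<Rightarrow> 'a) \<Rightarrow> 'a topology" where
  "weak_top c J = topology_generated_by {{x. u x \<in> U} | u U. u \<in> Kdual c J \<and> open U}"

definition classY :: "bool \<Rightarrow> ('a::real_normed_vector \<Rightarrow> 'a) \<Rightarrow> bool" where
  "classY c J \<longleftrightarrow> (\<forall>x :: nat \<Rightarrow> 'a.
      (\<lambda>n. real n) \<in> O(\<lambda>n. norm (x n)) \<longrightarrow> closedin (weak_top c J) (range x))"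

definition dim_gt_1 :: "bool \<Rightarrow> ('a::real_normed_vector \<Rightarrow> 'a) \<Rightarrow> bool" where
  "dim_gt_1 c J \<longleftrightarrow> (\<exists>x y. \<forall>a\<in>Kscal c. \<forall>b\<in>Kscal c.
      smul J a x + smul J b y = 0 \<longrightarrow> a = 0 \<and> b = 0)"

end

theory Submission
  imports Defs
begin


lemma Kscal_real: "complex_of_real r \<in> Kscal c" by (simp add: Kscal_def)
lemma Kscal_mult: "a \<in> Kscal c \<Longrightarrow> b \<in> Kscal c \<Longrightarrow> a * b \<in> Kscal c" by (auto simp: Kscal_def)
lemma Kscal_add: "a \<in> Kscal c \<Longrightarrow> b \<in> Kscal c \<Longrightarrow> a + b \<in> Kscal c" by (auto simp: Kscal_def)
lemma Kscal_diff: "a \<in> Kscal c \<Longrightarrow> b \<in> Kscal c \<Longrightarrow> a - b \<in> Kscal c" by (auto simp: Kscal_def)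
lemma Kscal_uminus: "a \<in> Kscal c \<Longrightarrow> - a \<in> Kscal c" by (auto simp: Kscal_def)
lemma Kscal_divide: "a \<in> Kscal c \<Longrightarrow> b \<in> Kscal c \<Longrightarrow> a / b \<in> Kscal c" by (auto simp: Kscal_def)
lemma Kscal_Im: "\<not> c \<Longrightarrow> z \<in> Kscal c \<Longrightarrow> Im z = 0" by (auto simp: Kscal_def complex_is_Real_iff)

lemma smul_add_scal: "smul J (z + w) x = smul J z x + smul J w x"
  by (simp add: smul_def algebra_simps)
lemma smul_diff_scal: "smul J (z - w) x = smul J z x - smul J w x"
  by (simp add: smul_def algebra_simps)
lemma smul_zero_scal [simp]: "smul J 0 x = 0" by (simp add: smul_def)
lemma smul_one [simp]: "smul J 1 x = x" by (simp add: smul_def)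
lemma smul_real [simp]: "smul J (complex_of_real r) x = r *\<^sub>R x" by (simp add: smul_def)

lemma smul_add_vec:
  assumes "c \<longrightarrow> cstruct J" "z \<in> Kscal c"
  shows "smul J z (a + b) = smul J z a + smul J z b"
proof (cases c)
  case True
  then have "linear J" using assms cstruct_def by auto
  then show ?thesis by (simp add: smul_def linear_add algebra_simps)
next
  case False
  then show ?thesis using Kscal_Im[OF False assms(2)] by (simp add: smul_def algebra_simps)
qed

lemma smul_zero_vec:
  assumes "c \<longrightarrow> cstruct J" "z \<in> Kscal c"
  shows "smul J z 0 = 0"
  using smul_add_vec[OF assms, of 0 0] by simp

lemma smul_smul:
  assumes "c \<longrightarrow> cstruct J" "z \<in> Kscal c" "w \<in> Kscal c"
  shows "smul J z (smul J w x) = smul J (z * w) x"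
proof (cases c)
  case True
  then have "linear J" "\<And>x. J (J x) = - x" using assms cstruct_def by auto
  then show ?thesis by (simp add: smul_def linear_add linear_scale algebra_simps)
next
  case False
  then show ?thesis using Kscal_Im[OF False assms(2)] Kscal_Im[OF False assms(3)] by (simp add: smul_def algebra_simps)
qed

lemma norm_smul:
  assumes "c \<longrightarrow> cstruct J" "z \<in> Kscal c"
  shows "norm (smul J z x) = cmod z * norm x"
proof (cases c)
  case True
  then show ?thesis using assms cstruct_def smul_def by metis
next
  case False
  then show ?thesis using Kscal_Im[OF False assms(2)] by (simp add: smul_def cmod_def)
qed

lemma Kdual_smul: "u \<in> Kdual c J \<Longrightarrow> z \<in> Kscal c \<Longrightarrow> u (smul J z x) = z * u x"
  by (simp add: Kdual_def)
lemma Kdual_K: "u \<in> Kdual c J \<Longrightarrow> u x \<in> Kscal c"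
  by (simp add: Kdual_def)
lemma Kdual_bl: "u \<in> Kdual c J \<Longrightarrow> bounded_linear u"
  by (simp add: Kdual_def)



lemma weak_topspace [simp]: "topspace (weak_top c J) = UNIV"
proof -
  have "UNIV \<in> {{x. u x \<in> U} | u U. u \<in> Kdual c J \<and> open U}"
    by (rule CollectI, rule exI[of _ "\<lambda>_. 0"], rule exI[of _ UNIV])
       (auto simp: Kdual_def Kscal_def smul_def)
  then show ?thesis unfolding weak_top_def topology_generated_by_topspace by auto
qed

lemma weak_basic: "f \<in> Kdual c J \<Longrightarrow> open U \<Longrightarrow> openin (weak_top c J) {x. f x \<in> U}"
  unfolding weak_top_def by (rule topology_generated_by_Basis) (rule CollectI, intro exI conjI, rule refl, assumption+)

lemma weak_pair:
  assumes f: "f \<in> Kdual c J" and g: "g \<in> Kdual c J" and G: "open G"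
  shows "openin (weak_top c J) {v. (f v, g v) \<in> G}"
proof (subst openin_subopen, intro ballI)
  fix v assume "v \<in> {v. (f v, g v) \<in> G}"
  then have "(f v, g v) \<in> G" by simp
  from open_prod_elim[OF G this] obtain A B where AB: "open A" "open B" "(f v, g v) \<in> A \<times> B" "A \<times> B \<subseteq> G"
    by blast
  have o: "openin (weak_top c J) ({x. f x \<in> A} \<inter> {x. g x \<in> B})"
    using weak_basic[OF f AB(1)] weak_basic[OF g AB(2)] by (rule openin_Int)
  have "{x. f x \<in> A} \<inter> {x. g x \<in> B} \<subseteq> {v. (f v, g v) \<in> G}" using AB(4) by blast
  then show "\<exists>T. openin (weak_top c J) T \<and> v \<in> T \<and> T \<subseteq> {v. (f v, g v) \<in> G}"
    using o AB(3) by blast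
qed

lemma weak_open_imp_open:
  assumes "openin (weak_top c J) S" shows "open S"
proof -
  have "generate_topology_on {{x. u x \<in> U} | u U. u \<in> Kdual c J \<and> open U} S"
    using assms unfolding weak_top_def by (rule openin_topology_generated_by)
  then show ?thesis
  proof induction
    case Empty then show ?case by simp
  next
    case (Int a b) then show ?case by (simp add: open_Int)
  next
    case (UN K) then show ?case by (simp add: open_Union)
  next
    case (Basis s)
    then obtain f U where fU: "s = {x. f x \<in> U}" "f \<in> Kdual c J" "open U" by blast
    have "continuous_on UNIV f" using Kdual_bl[OF fU(2)]
      by (simp add: linear_continuous_on)
    then have "open (f -` U)" using fU(3) by (simp add: open_vimage)
    then show ?case using fU(1) by (simp add: vimage_def)
  qed
qed

lemma weak_closed_imp_closed:
  assumes "closedin (weak_top c J) S" shows "closed S"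
proof -
  have "openin (weak_top c J) (- S)" using assms by (simp add: closedin_def Compl_eq_Diff_UNIV)
  then show ?thesis using weak_open_imp_open closed_def by blast
qed



lemma open_G:
  fixes t :: complex and U :: "complex set"
  assumes "open U"
  shows "open {p :: complex \<times> complex. fst p \<noteq> 0 \<and> t / fst p * snd p \<in> U}"
proof -
  have S: "open {p :: complex \<times> complex. fst p \<noteq> 0}"
    by (rule open_Collect_neq) (auto intro: continuous_intros)
  have "continuous_on {p :: complex \<times> complex. fst p \<noteq> 0} (\<lambda>p. t / fst p * snd p)"
    by (auto intro!: continuous_intros)
  from continuous_open_preimage[OF this S assms]
  show ?thesis by (simp add: vimage_def Int_def conj_commute)
qed

lemma weak_phi_open:
  assumes cJ: "c \<longrightarrow> cstruct J" and u: "u \<in> Kdual c J" and t: "t \<in> Kscal c"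
    and V: "openin (weak_top c J) V"
  shows "openin (weak_top c J) {v. u v \<noteq> 0 \<and> smul J (t / u v) v \<in> V}"
proof -
  have "generate_topology_on {{x. u x \<in> U} | u U. u \<in> Kdual c J \<and> open U} V"
    using V unfolding weak_top_def by (rule openin_topology_generated_by)
  then show ?thesis
  proof induction
    case Empty then show ?case by simp
  next
    case (Int a b)
    have "{v. u v \<noteq> 0 \<and> smul J (t / u v) v \<in> a \<inter> b} =
       {v. u v \<noteq> 0 \<and> smul J (t / u v) v \<in> a} \<inter> {v. u v \<noteq> 0 \<and> smul J (t / u v) v \<in> b}" by auto
    then show ?case using Int by (simp add: openin_Int)
  next
    case (UN K)
    have "{v. u v \<noteq> 0 \<and> smul J (t / u v) v \<in> \<Union>K} =
       \<Union>((\<lambda>k. {v. u v \<noteq> 0 \<and> smul J (t / u v) v \<in> k}) ` K)" by auto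
    then show ?case using UN by (auto intro!: openin_Union)
  next
    case (Basis s)
    then obtain f U where fU: "s = {x. f x \<in> U}" "f \<in> Kdual c J" "open U" by blast
    have eq: "{v. u v \<noteq> 0 \<and> smul J (t / u v) v \<in> s} =
        {v. (u v, f v) \<in> {p. fst p \<noteq> 0 \<and> t / fst p * snd p \<in> U}}"
    proof -
      have "f (smul J (t / u v) v) = t / u v * f v" for v
        by (rule Kdual_smul[OF fU(2) Kscal_divide[OF t Kdual_K[OF u]]])
      then show ?thesis using fU(1) by auto
    qed
    show ?case unfolding eq by (rule weak_pair[OF u fU(2) open_G[OF fU(3)]])
  qed
qed



lemma growth_bound:
  fixes a b C n :: real
  assumes "n \<ge> 1" "C > 0" "a > 0" "b \<ge> 0" "a \<le> C * (b / n)" "T > 0"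
  shows "n \<le> (C / T) * (T * b / a)"
proof -
  have "a * n \<le> C * b" using assms by (simp add: field_simps)
  then have "n \<le> C * b / a" using assms by (simp add: field_simps)
  also have "C * b / a = (C / T) * (T * b / a)" using assms by (simp add: field_simps)
  finally show ?thesis .
qed

lemma closure_subset:
  fixes c :: bool and J :: "'a::banach \<Rightarrow> 'a" and x :: "nat \<Rightarrow> 'a" and u :: "'a \<Rightarrow> complex"
  assumes cJ: "c \<longrightarrow> cstruct J"
    and Y: "classY c J"
    and u: "u \<in> Kdual c J"
    and O: "(\<lambda>n. cmod (u (x n))) \<in> O(\<lambda>n. norm (x n) / real n)"
  shows "weak_top c J closure_of {smul J z (x n) | z n. z \<in> Kscal c}
     \<subseteq> {smul J z (x n) | z n. z \<in> Kscal c} \<union> {v. u v = 0}"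
proof
  let ?\<Omega> = "{smul J z (x n) | z n. z \<in> Kscal c}"
  fix p assume pcl: "p \<in> weak_top c J closure_of ?\<Omega>"
  show "p \<in> ?\<Omega> \<union> {v. u v = 0}"
  proof (rule ccontr)
    assume "p \<notin> ?\<Omega> \<union> {v. u v = 0}"
    then have pO: "p \<notin> ?\<Omega>" and up: "u p \<noteq> 0" by auto
    define t where "t = u p"
    have tK: "t \<in> Kscal c" unfolding t_def by (rule Kdual_K[OF u])
    have t0: "t \<noteq> 0" using up t_def by simp
    have lu: "linear u" using Kdual_bl[OF u] bounded_linear.linear by blast
    have p0: "p \<noteq> 0"
    proof
      assume "p = 0"
      then have "u p = 0" using linear_0[OF lu] by simp
      then show False using up by simp
    qed
    define w where "w n = (if u (x n) \<noteq> 0 then smul J (t / u (x n)) (x n) else (2 * real n) *\<^sub>R p)" for n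
    obtain C where C: "C > 0" "eventually (\<lambda>n. norm (cmod (u (x n))) \<le> C * norm (norm (x n) / real n)) at_top"
      using O by (elim landau_o.bigE)
    define K where "K = max (C / cmod t) (1 / (2 * norm p))"
    have "eventually (\<lambda>n. norm (real n) \<le> K * norm (w n)) at_top"
      using C(2) eventually_ge_at_top[of "1::nat"]
    proof eventually_elim
      case (elim n)
      have n1: "real n \<ge> 1" using elim(2) by simp
      show ?case
      proof (cases "u (x n) \<noteq> 0")
        case True
        have wn: "norm (w n) = cmod t * norm (x n) / cmod (u (x n))"
          unfolding w_def using True norm_smul[OF cJ Kscal_divide[OF tK Kdual_K[OF u]]]
          by (simp add: norm_divide)
        have "real n \<le> (C / cmod t) * (cmod t * norm (x n) / cmod (u (x n)))"
          by (rule growth_bound) (use n1 C(1) True t0 elim(1) in auto)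
        also have "\<dots> \<le> K * norm (w n)" unfolding wn K_def
          by (rule mult_right_mono) auto
        finally show ?thesis by simp
      next
        case False
        have wn: "norm (w n) = 2 * real n * norm p" unfolding w_def using False by simp
        have "real n = (1 / (2 * norm p)) * norm (w n)" unfolding wn using p0 by simp
        also have "\<dots> \<le> K * norm (w n)" unfolding K_def
          by (rule mult_right_mono) auto
        finally show ?thesis by simp
      qed
    qed
    then have "(\<lambda>n. real n) \<in> O(\<lambda>n. norm (w n))" by (intro bigoI) simp
    then have cl: "closedin (weak_top c J) (range w)" using Y unfolding classY_def by blast
    have pw: "p \<notin> range w"
    proof
      assume "p \<in> range w"
      then obtain n where n: "p = w n" by auto
      show False
      proof (cases "u (x n) \<noteq> 0")
        case True
        then have "p = smul J (t / u (x n)) (x n)" using n w_def by simp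
        then have "p \<in> ?\<Omega>" using Kscal_divide[OF tK Kdual_K[OF u]] by blast
        then show False using pO by blast
      next
        case False
        then have "p = (2 * real n) *\<^sub>R p" using n w_def by simp
        then have "(2 * real n - 1) *\<^sub>R p = 0" by (simp add: algebra_simps)
        moreover have "2 * real n - 1 \<noteq> 0"
        proof
          assume "2 * real n - 1 = 0"
          then have "2 * n = (1::nat)" by linarith
          then show False by presburger
        qed
        ultimately show False using p0 by simp
      qed
    qed
    have "openin (weak_top c J) (- range w)" using cl by (simp add: closedin_def Compl_eq_Diff_UNIV)
    then have Wo: "openin (weak_top c J) {v. u v \<noteq> 0 \<and> smul J (t / u v) v \<in> - range w}"
      by (rule weak_phi_open[OF cJ u tK])
    have pW: "p \<in> {v. u v \<noteq> 0 \<and> smul J (t / u v) v \<in> - range w}"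
      using up pw t_def by simp
    define W where "W = {v. u v \<noteq> 0 \<and> smul J (t / u v) v \<in> - range w}"
    have "\<forall>T. p \<in> T \<and> openin (weak_top c J) T \<longrightarrow> (\<exists>y. y \<in> ?\<Omega> \<and> y \<in> T)"
      using pcl unfolding in_closure_of by (rule conjunct2)
    then have "p \<in> W \<and> openin (weak_top c J) W \<longrightarrow> (\<exists>y. y \<in> ?\<Omega> \<and> y \<in> W)" by (rule spec)
    then obtain y where y: "y \<in> ?\<Omega>" "y \<in> W" using Wo pW unfolding W_def by blast
    note y = y(1) y(2)[unfolded W_def]
    then obtain z n where zn: "y = smul J z (x n)" "z \<in> Kscal c" by blast
    have uy: "u y = z * u (x n)" using zn Kdual_smul[OF u] by simp
    then have z0: "z \<noteq> 0" and ux0: "u (x n) \<noteq> 0" using y(2) by auto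
    have "smul J (t / u y) y = smul J (t / u y * z) (x n)"
      unfolding zn(1) using smul_smul[OF cJ _ zn(2)] Kscal_divide[OF tK Kdual_K[OF u]] zn(1) by simp
    also have "t / u y * z = t / u (x n)" using uy z0 by (simp add: field_simps)
    also have "smul J (t / u (x n)) (x n) = w n" using ux0 w_def by simp
    finally show False using y(2) by auto
  qed
qed



lemma smul_uminus_scal: "smul J (- z) x = - smul J z x"
  using smul_diff_scal[of J 0 z x] by simp

lemma indep_exists:
  assumes cJ: "c \<longrightarrow> cstruct J" and D: "dim_gt_1 c J" and u: "u \<in> Kdual c J" and up: "u p \<noteq> 0"
  shows "\<exists>v. \<forall>\<alpha>\<in>Kscal c. \<forall>\<beta>\<in>Kscal c. smul J \<alpha> p + smul J \<beta> v = 0 \<longrightarrow> \<alpha> = 0 \<and> \<beta> = 0"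
proof (rule ccontr)
  assume nex: "\<not> ?thesis"
  obtain a b where ab: "\<forall>\<alpha>\<in>Kscal c. \<forall>\<beta>\<in>Kscal c. smul J \<alpha> a + smul J \<beta> b = 0 \<longrightarrow> \<alpha> = 0 \<and> \<beta> = 0"
    using D unfolding dim_gt_1_def by blast
  have dep: "\<exists>\<alpha>\<in>Kscal c. \<exists>\<beta>\<in>Kscal c. smul J \<alpha> p + smul J \<beta> v = 0 \<and> \<beta> \<noteq> 0" for v
  proof -
    from nex obtain \<alpha> \<beta> where h: "\<alpha> \<in> Kscal c" "\<beta> \<in> Kscal c" "smul J \<alpha> p + smul J \<beta> v = 0" "\<not> (\<alpha> = 0 \<and> \<beta> = 0)"
      by blast
    have "\<beta> \<noteq> 0"
    proof
      assume b0: "\<beta> = 0"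
      then have "smul J \<alpha> p = 0" using h(3) by simp
      then have "\<alpha> * u p = 0" using Kdual_smul[OF u h(1)] linear_0[OF bounded_linear.linear[OF Kdual_bl[OF u]]]
        by metis
      then show False using up h(4) b0 by simp
    qed
    then show ?thesis using h by blast
  qed
  obtain \<alpha>1 \<beta>1 where h1: "\<alpha>1 \<in> Kscal c" "\<beta>1 \<in> Kscal c" "smul J \<alpha>1 p + smul J \<beta>1 a = 0" "\<beta>1 \<noteq> 0"
    using dep[of a] by blast
  obtain \<alpha>2 \<beta>2 where h2: "\<alpha>2 \<in> Kscal c" "\<beta>2 \<in> Kscal c" "smul J \<alpha>2 p + smul J \<beta>2 b = 0" "\<beta>2 \<noteq> 0"
    using dep[of b] by blast
  have e1: "smul J \<alpha>2 (smul J \<alpha>1 p + smul J \<beta>1 a) - smul J \<alpha>1 (smul J \<alpha>2 p + smul J \<beta>2 b)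
     = smul J (\<alpha>2 * \<alpha>1) p + smul J (\<alpha>2 * \<beta>1) a - (smul J (\<alpha>1 * \<alpha>2) p + smul J (\<alpha>1 * \<beta>2) b)"
    by (simp only: smul_add_vec[OF cJ h1(1)] smul_add_vec[OF cJ h2(1)] smul_smul[OF cJ h2(1) h1(1)]
        smul_smul[OF cJ h2(1) h1(2)] smul_smul[OF cJ h1(1) h2(1)] smul_smul[OF cJ h1(1) h2(2)])
  have "0 = smul J \<alpha>2 (smul J \<alpha>1 p + smul J \<beta>1 a) - smul J \<alpha>1 (smul J \<alpha>2 p + smul J \<beta>2 b)"
    unfolding h1(3) h2(3) using smul_zero_vec[OF cJ h1(1)] smul_zero_vec[OF cJ h2(1)] by simp
  also have "\<dots> = smul J (\<alpha>2 * \<beta>1) a + smul J (- (\<alpha>1 * \<beta>2)) b"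
    unfolding e1 by (simp add: smul_uminus_scal mult.commute)
  finally have "smul J (\<alpha>2 * \<beta>1) a + smul J (- (\<alpha>1 * \<beta>2)) b = 0" by simp
  then have "\<alpha>2 * \<beta>1 = 0" using ab Kscal_mult Kscal_uminus h1 h2 by blast
  then have "\<alpha>2 = 0" using h1(4) by simp
  then have "smul J 0 a + smul J \<beta>2 b = 0" using h2(3) by simp
  then have "\<beta>2 = 0" using ab h2(2) by (metis Kscal_real of_real_0)
  then show False using h2(4) by simp
qed



lemma interior_empty:
  fixes c :: bool and J :: "'a::banach \<Rightarrow> 'a" and x :: "nat \<Rightarrow> 'a" and u :: "'a \<Rightarrow> complex"
  assumes cJ: "c \<longrightarrow> cstruct J" and D: "dim_gt_1 c J"
    and u: "u \<in> Kdual c J" and un: "u \<noteq> (\<lambda>_. 0)"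
    and S: "S \<subseteq> {smul J z (x n) | z n. z \<in> Kscal c} \<union> {v. u v = 0}"
  shows "interior S = {}"
proof (rule ccontr)
  assume "interior S \<noteq> {}"
  then obtain q where q: "q \<in> interior S" by blast
  have lu: "linear u" using Kdual_bl[OF u] bounded_linear.linear by blast
  obtain r where r: "r > 0" "ball q r \<subseteq> interior S"
    using q open_interior open_contains_ball by blast
  obtain e0 where e0: "u e0 \<noteq> 0" using un by blast
  have "\<exists>p \<in> ball q r. u p \<noteq> 0"
  proof (cases "u q = 0")
    case False then show ?thesis using r(1) by force
  next
    case True
    have ne0: "e0 \<noteq> 0" using e0 linear_0[OF lu] by auto
    define p where "p = q + (r / (2 * norm e0)) *\<^sub>R e0"
    have "u p = of_real (r / (2 * norm e0)) * u e0"
      unfolding p_def using True linear_add[OF lu] linear_scale[OF lu] by (simp add: scaleR_conv_of_real)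
    then have "u p \<noteq> 0" using e0 ne0 r(1) by simp
    moreover have "dist q p < r" unfolding p_def dist_norm using ne0 r(1) by simp
    ultimately show ?thesis by auto
  qed
  then obtain p where p: "p \<in> interior S" "u p \<noteq> 0" using r(2) by blast
  obtain r' where r': "r' > 0" "ball p r' \<subseteq> S"
    using p(1) mem_interior by blast
  obtain v where v: "\<forall>\<alpha>\<in>Kscal c. \<forall>\<beta>\<in>Kscal c. smul J \<alpha> p + smul J \<beta> v = 0 \<longrightarrow> \<alpha> = 0 \<and> \<beta> = 0"
    using indep_exists[OF cJ D u p(2)] by blast
  define \<delta> where "\<delta> = min (r' / (norm v + 1)) (cmod (u p) / (cmod (u v) + 1))"
  have \<delta>0: "\<delta> > 0" unfolding \<delta>_def using r'(1) p(2) by (auto intro!: divide_pos_pos add_nonneg_pos)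
  have mem: "\<exists>n z. z \<in> Kscal c \<and> p + s *\<^sub>R v = smul J z (x n) \<and> u (p + s *\<^sub>R v) \<noteq> 0"
    if s: "s \<in> {0<..<\<delta>}" for s
  proof -
    have s0: "0 < s" "s < \<delta>" using s by auto
    have "s * norm v < r'"
    proof -
      have "s * norm v \<le> s * (norm v + 1)" using s0 by simp
      also have "\<dots> < \<delta> * (norm v + 1)" using s0 by (intro mult_strict_right_mono) (auto simp: add_nonneg_pos)
      also have "\<dots> \<le> r'"
      proof -
        have pos: "norm v + 1 > 0" by (simp add: add_nonneg_pos)
        have "\<delta> \<le> r' / (norm v + 1)" unfolding \<delta>_def by simp
        then show ?thesis using pos by (simp add: pos_le_divide_eq)
      qed
      finally show ?thesis .
    qed
    then have "p + s *\<^sub>R v \<in> ball p r'" using s0 by (simp add: dist_norm)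
    then have inS: "p + s *\<^sub>R v \<in> S" using r'(2) by blast
    have uu: "u (p + s *\<^sub>R v) = u p + of_real s * u v"
      using linear_add[OF lu] linear_scale[OF lu] by (simp add: scaleR_conv_of_real)
    have "cmod (of_real s * u v) < cmod (u p)"
    proof -
      have "cmod (of_real s * u v) = s * cmod (u v)" using s0 by (simp add: norm_mult)
      also have "\<dots> \<le> s * (cmod (u v) + 1)" using s0 by simp
      also have "\<dots> < \<delta> * (cmod (u v) + 1)" using s0 by (intro mult_strict_right_mono) (auto simp: add_nonneg_pos)
      also have "\<dots> \<le> cmod (u p)"
      proof -
        have pos: "cmod (u v) + 1 > 0" by (simp add: add_nonneg_pos)
        have "\<delta> \<le> cmod (u p) / (cmod (u v) + 1)" unfolding \<delta>_def by simp
        then show ?thesis using pos by (simp add: pos_le_divide_eq)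
      qed
      finally show ?thesis .
    qed
    then have "u (p + s *\<^sub>R v) \<noteq> 0" unfolding uu
      by (metis add.commute add_diff_cancel_left' diff_zero norm_minus_commute order_less_irrefl)
    then show ?thesis using inS S by blast
  qed
  then obtain N Z where NZ: "\<And>s. s \<in> {0<..<\<delta>} \<Longrightarrow> Z s \<in> Kscal c \<and> p + s *\<^sub>R v = smul J (Z s) (x (N s)) \<and> u (p + s *\<^sub>R v) \<noteq> 0"
    by metis
  have inj: "inj_on N {0<..<\<delta>}"
  proof (rule inj_onI, rule ccontr)
    fix s s' assume ss: "s \<in> {0<..<\<delta>}" "s' \<in> {0<..<\<delta>}" "N s = N s'" "s \<noteq> s'"
    define n where "n = N s"
    define z where "z = Z s"
    define z' where "z' = Z s'"
    have zK: "z \<in> Kscal c" "z' \<in> Kscal c" using NZ ss unfolding z_def z'_def by auto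
    have e: "p + s *\<^sub>R v = smul J z (x n)" "p + s' *\<^sub>R v = smul J z' (x n)"
      using NZ ss unfolding z_def z'_def n_def by auto
    have sK: "complex_of_real s \<in> Kscal c" "complex_of_real s' \<in> Kscal c" by (rule Kscal_real)+
    have "smul J z' (p + s *\<^sub>R v) = smul J (z' * z) (x n)" unfolding e using smul_smul[OF cJ zK(2) zK(1)] .
    also have "\<dots> = smul J z (p + s' *\<^sub>R v)" unfolding e using smul_smul[OF cJ zK(1) zK(2)] by (simp add: mult.commute)
    finally have eq: "smul J z' p + smul J (z' * of_real s) v = smul J z p + smul J (z * of_real s') v"
      using smul_add_vec[OF cJ zK(1)] smul_add_vec[OF cJ zK(2)] smul_smul[OF cJ zK(1) sK(2), of v]
        smul_smul[OF cJ zK(2) sK(1), of v] by simp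
    have "smul J (z' - z) p + smul J (z' * of_real s - z * of_real s') v = 0"
      using eq by (simp add: smul_diff_scal algebra_simps)
    then have "z' - z = 0 \<and> z' * of_real s - z * of_real s' = 0"
      using v Kscal_diff Kscal_mult zK sK by blast
    then have h: "z' = z" "z' * of_real s = z * of_real s'" by auto
    have "z * (of_real s - of_real s') = z' * of_real s - z * of_real s'" using h(1) by (simp add: algebra_simps)
    then have "z * (of_real s - of_real s') = 0" using h(2) by simp
    then have "z = 0" using ss(4) by simp
    then have "p + s *\<^sub>R v = 0" using e(1) smul_zero_scal by simp
    moreover have "u (p + s *\<^sub>R v) \<noteq> 0" using NZ[OF ss(1)] by blast
    ultimately show False using linear_0[OF lu] by simp
  qed
  have "countable (N ` {0<..<\<delta>})" by simp
  then have "countable {0<..<\<delta>}" using inj countable_image_inj_on by blast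
  then show False using uncountable_open_interval \<delta>0 by blast
qed


theorem lemma2p3:
  fixes c :: bool and J :: "'a::banach \<Rightarrow> 'a" and x :: "nat \<Rightarrow> 'a" and u :: "'a \<Rightarrow> complex"
  assumes "c \<longrightarrow> cstruct J"
    and "classY c J"
    and "dim_gt_1 c J"
    and "u \<in> Kdual c J" and "u \<noteq> (\<lambda>_. 0)"
    and "(\<lambda>n. cmod (u (x n))) \<in> O(\<lambda>n. norm (x n) / real n)"
  shows "interior (closure (weak_top c J closure_of {smul J z (x n) | z n. z \<in> Kscal c})) = {}
     \<and> weak_top c J closure_of {smul J z (x n) | z n. z \<in> Kscal c} \<noteq> UNIV"
proof -
  define A where "A = weak_top c J closure_of {smul J z (x n) | z n. z \<in> Kscal c}"
  have sub: "A \<subseteq> {smul J z (x n) | z n. z \<in> Kscal c} \<union> {v. u v = 0}"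
    unfolding A_def by (rule closure_subset[OF assms(1,2,4,6)])
  have "closed A" unfolding A_def by (rule weak_closed_imp_closed[OF closedin_closure_of])
  then have cA: "closure A = A" by (rule closure_closed)
  have iA: "interior A = {}" by (rule interior_empty[OF assms(1,3,4,5) sub])
  have "A \<noteq> UNIV" using iA by auto
  then show ?thesis using iA cA unfolding A_def by simp
qed

end
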